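(* Let $G$ be a very well-covered graph with $V(G)=\{x_1,\ldots,x_h,y_1,\ldots,y_h\}$ such that $\{x_1,\ldots,x_h\}$ is a minimal vertex cover, $\{y_1,\ldots,y_h\}$ is a maximal independent set, and $\{x_i,y_i\}\in E(G)$ for all $i$. Let $s\ge1$, let $e_1,\ldots,e_s\in E(G)$ and let $G'$ be the graph associated to $(I(G)^{s+1}:e_1\cdots e_s)$ as described in the context. Let $i,j,k$ be distinct and $t_i\in\{x_i,y_i\}$. If $\{t_i,x_j\}\in E(G')$ and $\{y_j,x_k\}\in E(G')$, then $\{t_i,x_k\}\in E(G')$ or $\{t_i,y_j\}\in E(G')$.
   Context: $I(G)=(uv\mid\{u,v\}\in E(G))$ is the edge ideal; edges are identified with the products of their endpoints. $G$ is very well-covered if it has no isolated vertices, all minimal vertex covers have the same size, and this size is $|V(G)|/2$. Even-connection: vertices $u,v$ (possibly equal) are even-connected with respect to $e_1\cdots e_s$ if there is a sequence $p_0p_1\cdots p_{2k+1}$, $k\ge1$, of vertices with $p_0=u$, $p_{2k+1}=v$, $\{p_r,p_{r+1}\}\in E(G)$ for all $0\le r\le 2k$, each $\{p_{2\ell+1},p_{2\ell+2}\}$ ($0\le\ell\le k-1$) equal to some $e_m$, and each edge appearing among the $\{p_{2\ell+1},p_{2\ell+2}\}$ at most as many times as it appears in the list $e_1,\dots,e_s$. It is known that $(I(G)^{s+1}:e_1\cdots e_s)$ is minimally generated by the monomials $uv$ with $\{u,v\}\in E(G)$ or $u,v$ even-connected with respect to $e_1\cdots e_s$. Its polarization replaces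 each generator $u^2$ by $u\,u^*$ with a new variable $u^*$; $G'$ is the graph (on $V(G)$ together with the new vertices $u^*$) whose edge ideal is this polarization. Thus for $u\ne v$ in $V(G)$, $\{u,v\}\in E(G')$ iff $\{u,v\}\in E(G)$ or $u,v$ are even-connected. *)

theory Defs
  imports Main "HOL-Library.Multiset"
begin

definition simple_graph :: "'a set \<Rightarrow> 'a set set \<Rightarrow> bool" where
  "simple_graph V E \<longleftrightarrow> finite V \<and>
     (\<forall>e\<in>E. \<exists>a b. a \<in> V \<and> b \<in> V \<and> a \<noteq> b \<and> e = {a, b})"

definition vertex_cover :: "'a set \<Rightarrow> 'a set set \<Rightarrow> 'a set \<Rightarrow> bool" where
  "vertex_cover V E C \<longleftrightarrow> C \<subseteq> V \<and> (\<forall>e\<in>E. e \<inter> C \<noteq> {})"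

definition minimal_vertex_cover :: "'a set \<Rightarrow> 'a set set \<Rightarrow> 'a set \<Rightarrow> bool" where
  "minimal_vertex_cover V E C \<longleftrightarrow> vertex_cover V E C \<and>
     (\<forall>D. D \<subset> C \<longrightarrow> \<not> vertex_cover V E D)"

definition independent_set :: "'a set \<Rightarrow> 'a set set \<Rightarrow> 'a set \<Rightarrow> bool" where
  "independent_set V E S \<longleftrightarrow> S \<subseteq> V \<and> (\<forall>e\<in>E. \<not> e \<subseteq> S)"

definition maximal_independent_set :: "'a set \<Rightarrow> 'a set set \<Rightarrow> 'a set \<Rightarrow> bool" where
  "maximal_independent_set V E S \<longleftrightarrow> independent_set V E S \<and>
     (\<forall>T. S \<subset> T \<longrightarrow> \<not> independent_set V E T)"

definition very_well_covered :: "'a set \<Rightarrow> 'a set set \<Rightarrow> bool" where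
  "very_well_covered V E \<longleftrightarrow>
     (\<forall>v\<in>V. \<exists>e\<in>E. v \<in> e) \<and>
     (\<forall>C. minimal_vertex_cover V E C \<longrightarrow> 2 * card C = card V)"

text \<open>u, v even-connected w.r.t. the product e_1 ... e_s (given as the list es):
  a walk p_0 ... p_{2k+1}, k \<ge> 1, whose odd steps p_{2l+1} p_{2l+2} are edges from es,
  each used at most as often as it occurs in es.\<close>
definition even_connected :: "'a set set \<Rightarrow> 'a set list \<Rightarrow> 'a \<Rightarrow> 'a \<Rightarrow> bool" where
  "even_connected E es u v \<longleftrightarrow>
     (\<exists>p k. k \<ge> 1 \<and> length p = 2 * k + 2 \<and> p ! 0 = u \<and> p ! (2 * k + 1) = v \<and>
        (\<forall>r < 2 * k + 1. {p ! r, p ! (r + 1)} \<in> E) \<and>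
        (\<forall>l < k. {p ! (2 * l + 1), p ! (2 * l + 2)} \<in> set es) \<and>
        (\<forall>e. count (mset (map (\<lambda>l. {p ! (2 * l + 1), p ! (2 * l + 2)}) [0..<k])) e
               \<le> count (mset es) e))"

definition edge_G' :: "'a set set \<Rightarrow> 'a set list \<Rightarrow> 'a \<Rightarrow> 'a \<Rightarrow> bool" where
  "edge_G' E es u v \<longleftrightarrow> u \<noteq> v \<and> ({u, v} \<in> E \<or> even_connected E es u v)"

end

theory Submission
  imports Defs "HOL-Library.Multiset"
begin


definition esl :: "(nat \<Rightarrow> 'a) \<Rightarrow> nat \<Rightarrow> 'a set list" where
  "esl f m = map (\<lambda>l. {f (2*l+1), f (2*l+2)}) [0..<m]"

definition wlk :: "'a set set \<Rightarrow> 'a set list \<Rightarrow> (nat \<Rightarrow> 'a) \<Rightarrow> nat \<Rightarrow> bool" where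
  "wlk E es f m \<longleftrightarrow> (\<forall>r<2*m+1. {f r, f (Suc r)} \<in> E) \<and> mset (esl f m) \<subseteq># mset es"

lemma esl_len[simp]: "length (esl f m) = m" by (simp add: esl_def)
lemma esl_nth[simp]: "l < m \<Longrightarrow> esl f m ! l = {f (2*l+1), f (2*l+2)}" by (simp add: esl_def)

lemma disj_le:
  assumes "mset A \<subseteq># M" "mset B \<subseteq># M" "set A \<inter> set B = {}"
  shows "mset (A @ B) \<subseteq># M"
  unfolding subseteq_mset_def
proof
  fix e
  show "count (mset (A @ B)) e \<le> count M e"
  proof (cases "e \<in> set A")
    case True
    then have "e \<notin> set B" using assms(3) by blast
    then have "count (mset B) e = 0" by (simp add: count_eq_zero_iff)
    moreover have "count (mset A) e \<le> count M e" using assms(1) by (simp add: mset_subset_eq_count)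
    ultimately show ?thesis by (simp only: mset_append count_union)
  next
    case False
    then have "count (mset A) e = 0" by (simp add: count_eq_zero_iff)
    moreover have "count (mset B) e \<le> count M e" using assms(2) by (simp add: mset_subset_eq_count)
    ultimately show ?thesis by (simp only: mset_append count_union)
  qed
qed

lemma take_le: "mset (take a xs) \<subseteq># mset xs"
  by (metis append_take_drop_id mset_append mset_subset_eq_add_left)
lemma drop_le: "mset (drop a xs) \<subseteq># mset xs"
  by (metis append_take_drop_id mset_append mset_subset_eq_add_right)

lemma splice1:
  assumes "wlk E es f m" "wlk E es g n" "{f (2*m), g 1} \<in> E"
    "set (esl f m) \<inter> set (esl g n) = {}"
  defines "h \<equiv> \<lambda>r. if r \<le> 2*m then f r else g (r - 2*m)"
  shows "wlk E es h (m+n) \<and> h 0 = f 0 \<and> h (2*(m+n)+1) = g (2*n+1)"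
proof -
  have e: "esl h (m+n) = esl f m @ esl g n"
    by (rule nth_equalityI) (auto simp: h_def nth_append algebra_simps Suc_diff_le)
  have E1: "\<forall>r<2*(m+n)+1. {h r, h (Suc r)} \<in> E"
  proof (intro allI impI)
    fix r assume r: "r < 2*(m+n)+1"
    show "{h r, h (Suc r)} \<in> E"
    proof (cases "r < 2*m")
      case True then show ?thesis using assms(1) by (auto simp: h_def wlk_def)
    next
      case False
      show ?thesis
      proof (cases "r = 2*m")
        case True then show ?thesis using assms(3) by (simp add: h_def)
      next
        case False
        with \<open>\<not> r < 2*m\<close> have "r > 2*m" by simp
        then have "Suc r - 2*m = Suc (r - 2*m)" "r - 2*m < 2*n+1" using r by auto
        then show ?thesis using assms(2) \<open>r > 2*m\<close> by (auto simp: h_def wlk_def)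
      qed
    qed
  qed
  have "mset (esl h (m+n)) \<subseteq># mset es"
    unfolding e using assms(1,2,4) by (intro disj_le) (auto simp: wlk_def)
  with E1 show ?thesis by (simp add: wlk_def h_def)
qed

lemma splice2:
  assumes "wlk E es f m" "{f (2*m), v} \<in> E"
  defines "h \<equiv> \<lambda>r. if r \<le> 2*m then f r else v"
  shows "wlk E es h m \<and> h 0 = f 0 \<and> h (2*m+1) = v"
proof -
  have e: "esl h m = esl f m"
    by (rule nth_equalityI) (auto simp: h_def)
  have "\<forall>r<2*m+1. {h r, h (Suc r)} \<in> E"
    using assms(1,2) by (auto simp: h_def wlk_def less_Suc_eq)
  then show ?thesis using assms(1) e by (simp add: wlk_def h_def)
qed

lemma splice3:
  assumes "wlk E es f m" "wlk E es g n" "a < m" "b < n"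
    "f (2*a+1) = g (2*b+1)" "f (2*a+2) = g (2*b+2)"
    "\<forall>a'<a. esl f m ! a' \<notin> set (esl g n)"
  defines "h \<equiv> \<lambda>r. if r \<le> 2*a then f r else g (r - 2*a + 2*b)"
  shows "wlk E es h (a+(n-b)) \<and> h 0 = f 0 \<and> h (2*(a+(n-b))+1) = g (2*n+1)"
proof -
  have e: "esl h (a+(n-b)) = take a (esl f m) @ drop b (esl g n)"
    using assms(3,4) by (intro nth_equalityI) (auto simp: h_def nth_append algebra_simps Suc_diff_le)
  have E1: "\<forall>r<2*(a+(n-b))+1. {h r, h (Suc r)} \<in> E"
  proof (intro allI impI)
    fix r assume r: "r < 2*(a+(n-b))+1"
    show "{h r, h (Suc r)} \<in> E"
    proof (cases "r < 2*a")
      case True then show ?thesis using assms(1,3) by (auto simp: h_def wlk_def)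
    next
      case False
      show ?thesis
      proof (cases "r = 2*a")
        case True
        have "{f (2*a), f (Suc (2*a))} \<in> E" using assms(1,3) by (simp add: wlk_def)
        then show ?thesis using True assms(5) by (simp add: h_def)
      next
        case False
        with \<open>\<not> r < 2*a\<close> have "r > 2*a" by simp
        then have "Suc r - 2*a + 2*b = Suc (r - 2*a + 2*b)" "r - 2*a + 2*b < 2*n+1" using r assms(4) by auto
        then show ?thesis using assms(2) \<open>r > 2*a\<close> by (auto simp: h_def wlk_def)
      qed
    qed
  qed
  have d: "set (take a (esl f m)) \<inter> set (drop b (esl g n)) = {}"
  proof -
    have "set (take a (esl f m)) \<inter> set (esl g n) = {}"
      using assms(3,7) by (auto simp: in_set_conv_nth)
    then show ?thesis using set_drop_subset[of b "esl g n"] by blast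
  qed
  have "mset (esl h (a+(n-b))) \<subseteq># mset es"
    unfolding e using assms(1,2) d
    by (intro disj_le) (auto simp: wlk_def intro: subset_mset.trans[OF take_le] subset_mset.trans[OF drop_le])
  moreover have "Suc (2 * (a + n - b) + 2 * b) - 2 * a = Suc (2*n)" "\<not> Suc (2*(a+n-b)) \<le> 2*a" using assms(4) by simp_all
  ultimately show ?thesis using E1 assms(4) by (simp add: wlk_def h_def)
qed

lemma splice4:
  assumes "wlk E es f m" "wlk E es g n" "a < m" "b < n"
    "f (2*a+1) = g (2*b+2)" "f (2*a+2) = g (2*b+1)"
    "\<forall>a'<a. esl f m ! a' \<notin> set (esl g n)"
  defines "h \<equiv> \<lambda>r. if r \<le> 2*a then f r else g (2*a+2*b+3 - r)"
  shows "wlk E es h (a+b+1) \<and> h 0 = f 0 \<and> h (2*(a+b+1)+1) = g 0"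
proof -
  have e: "esl h (a+b+1) = take a (esl f m) @ rev (take (b+1) (esl g n))"
  proof (rule nth_equalityI)
    show "length (esl h (a + b + 1)) = length (take a (esl f m) @ rev (take (b + 1) (esl g n)))"
      using assms(3,4) by simp
    fix i assume i: "i < length (esl h (a + b + 1))"
    show "esl h (a + b + 1) ! i = (take a (esl f m) @ rev (take (b + 1) (esl g n))) ! i"
    proof (cases "i < a")
      case True then show ?thesis using assms(3) i by (simp add: h_def nth_append)
    next
      case False
      define c where "c = a + b - i"
      have c: "c < n" "i \<le> a+b" using i assms(4) False by (auto simp: c_def)
      have 1: "2*a+2*b+3 - (2*i+1) = 2*c+2" "2*a+2*b+3 - (2*i+2) = 2*c+1" using c(2) by (auto simp: c_def)
      have "(take a (esl f m) @ rev (take (b + 1) (esl g n))) ! i = esl g n ! c"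
      proof -
        have idx: "b - (i - a) = c" "i - a \<le> b" using False c by (auto simp: c_def)
        have mn: "min (Suc b) n = Suc b" using assms(4) by simp
        show ?thesis using False assms(3,4) c idx by (simp add: nth_append rev_nth mn)
      qed
      then show ?thesis using False c i 1 by (simp add: h_def insert_commute)
    qed
  qed
  have E1: "\<forall>r<2*(a+b+1)+1. {h r, h (Suc r)} \<in> E"
  proof (intro allI impI)
    fix r assume r: "r < 2*(a+b+1)+1"
    show "{h r, h (Suc r)} \<in> E"
    proof (cases "r < 2*a")
      case True then show ?thesis using assms(1,3) by (auto simp: h_def wlk_def)
    next
      case False
      show ?thesis
      proof (cases "r = 2*a")
        case True
        have "{f (2*a), f (Suc (2*a))} \<in> E" using assms(1,3) by (simp add: wlk_def)
        then show ?thesis using True assms(5) by (simp add: h_def)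
      next
        case False
        with \<open>\<not> r < 2*a\<close> have "r > 2*a" by simp
        define c where "c = 2*a+2*b+2 - r"
        have "2*a+2*b+3 - r = Suc c" "2*a+2*b+3 - Suc r = c" "c < 2*n+1" using r assms(4) \<open>r > 2*a\<close> by (auto simp: c_def)
        then show ?thesis using assms(2) \<open>r > 2*a\<close> by (auto simp: h_def wlk_def insert_commute)
      qed
    qed
  qed
  have d: "set (take a (esl f m)) \<inter> set (rev (take (b+1) (esl g n))) = {}"
  proof -
    have "set (take a (esl f m)) \<inter> set (esl g n) = {}"
      using assms(3,7) by (auto simp: in_set_conv_nth)
    then show ?thesis using set_take_subset by fastforce
  qed
  have "mset (esl h (a+b+1)) \<subseteq># mset es"
    unfolding e using assms(1,2) d
    by (intro disj_le) (auto simp: wlk_def intro: subset_mset.trans[OF take_le])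
  with E1 show ?thesis by (simp add: wlk_def h_def)
qed

lemma splice:
  assumes f: "wlk E es f m" and g: "wlk E es g n" and c: "{f (2*m), g 1} \<in> E \<or> f (2*m) = g 1"
  shows "\<exists>h m'. wlk E es h m' \<and> h 0 = f 0 \<and> (h (2*m'+1) = g (2*n+1) \<or> h (2*m'+1) = g 0)"
proof (cases "\<exists>a. a<m \<and> esl f m ! a \<in> set (esl g n)")
  case True
  then obtain a where a: "a<m" "esl f m ! a \<in> set (esl g n)"
    "\<forall>a'<a. \<not>(a'<m \<and> esl f m ! a' \<in> set (esl g n))"
    using exists_least_iff[of "\<lambda>a. a<m \<and> esl f m ! a \<in> set (esl g n)"] by blast
  have mn: "\<forall>a'<a. esl f m ! a' \<notin> set (esl g n)" using a(1,3) by auto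
  from a(2) obtain b where b: "b < n" "esl g n ! b = esl f m ! a" by (auto simp: in_set_conv_nth)
  then have "{g (2*b+1), g (2*b+2)} = {f (2*a+1), f (2*a+2)}" using a(1) by simp
  then have "(f (2*a+1) = g (2*b+1) \<and> f (2*a+2) = g (2*b+2)) \<or> (f (2*a+1) = g (2*b+2) \<and> f (2*a+2) = g (2*b+1))"
    by (auto simp: doubleton_eq_iff)
  then show ?thesis
  proof
    assume o: "f (2*a+1) = g (2*b+1) \<and> f (2*a+2) = g (2*b+2)"
    show ?thesis using splice3[OF f g a(1) b(1) o[THEN conjunct1] o[THEN conjunct2] mn] by blast
  next
    assume o: "f (2*a+1) = g (2*b+2) \<and> f (2*a+2) = g (2*b+1)"
    show ?thesis using splice4[OF f g a(1) b(1) o[THEN conjunct1] o[THEN conjunct2] mn] by blast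
  qed
next
  case False
  then have d: "set (esl f m) \<inter> set (esl g n) = {}" by (auto simp: in_set_conv_nth)
  from c show ?thesis
  proof
    assume "{f (2*m), g 1} \<in> E"
    then show ?thesis using splice1[OF f g _ d] by blast
  next
    assume e: "f (2*m) = g 1"
    have "{g 0, g (Suc 0)} \<in> E" using g by (simp add: wlk_def)
    then have "{f (2*m), g 0} \<in> E" using e by (simp add: insert_commute)
    then show ?thesis using splice2[OF f] by blast
  qed
qed

lemma toW:
  assumes "edge_G' E es u v"
  shows "\<exists>f m. wlk E es f m \<and> f 0 = u \<and> f (2*m+1) = v"
proof -
  from assms have "{u,v} \<in> E \<or> even_connected E es u v" by (simp add: edge_G'_def)
  then show ?thesis
  proof
    assume e: "{u,v} \<in> E"
    let ?f = "\<lambda>r::nat. if r = 0 then u else v"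
    have "wlk E es ?f 0" using e by (simp add: wlk_def esl_def)
    then show ?thesis by (intro exI[of _ ?f] exI[of _ 0]) simp
  next
    assume "even_connected E es u v"
    then obtain p k where p: "k \<ge> 1" "length p = 2 * k + 2" "p ! 0 = u" "p ! (2 * k + 1) = v"
        "\<forall>r < 2 * k + 1. {p ! r, p ! (r + 1)} \<in> E"
        "\<forall>e. count (mset (map (\<lambda>l. {p ! (2 * l + 1), p ! (2 * l + 2)}) [0..<k])) e
               \<le> count (mset es) e"
      unfolding even_connected_def by blast
    have "wlk E es (\<lambda>r. p ! r) k" using p(5,6) by (simp add: wlk_def esl_def subseteq_mset_def)
    then show ?thesis using p(3,4) by blast
  qed
qed

lemma fromW:
  assumes "wlk E es f m" "f 0 \<noteq> f (2*m+1)"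
  shows "edge_G' E es (f 0) (f (2*m+1))"
proof (cases "m = 0")
  case True
  then show ?thesis using assms by (simp add: wlk_def edge_G'_def)
next
  case False
  let ?p = "map f [0..<2*m+2]"
  have le: "mset (map (\<lambda>l. {?p ! (2 * l + 1), ?p ! (2 * l + 2)}) [0..<m]) = mset (esl f m)"
    unfolding esl_def by (rule arg_cong[where f=mset], rule map_cong) (auto simp del: upt_Suc)
  have sub: "mset (esl f m) \<subseteq># mset es" using assms(1) by (simp add: wlk_def)
  have ins: "\<forall>l<m. {?p ! (2 * l + 1), ?p ! (2 * l + 2)} \<in> set es"
  proof (intro allI impI)
    fix l assume l: "l < m"
    have "esl f m ! l \<in> set (esl f m)" using l by (metis esl_len nth_mem)
    then have "esl f m ! l \<in># mset es" using sub by (metis mset_subset_eqD set_mset_mset)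
    then show "{?p ! (2 * l + 1), ?p ! (2 * l + 2)} \<in> set es" using l by (simp del: upt_Suc)
  qed
  have "even_connected E es (f 0) (f (2*m+1))"
    unfolding even_connected_def
    apply (rule exI[of _ ?p], rule exI[of _ m])
    using False assms(1) ins le sub
    by (auto simp: wlk_def subseteq_mset_def nth_Cons' simp del: upt_Suc)
  then show ?thesis using assms(2) by (simp add: edge_G'_def)
qed


locale vwc =
  fixes V :: "'a set" and E :: "'a set set" and x y :: "nat \<Rightarrow> 'a" and h :: nat
  assumes sg: "simple_graph V E" and vw: "very_well_covered V E"
    and Vd: "V = x ` {1..h} \<union> y ` {1..h}"
    and ix: "inj_on x {1..h}" and iy: "inj_on y {1..h}" and dj: "x ` {1..h} \<inter> y ` {1..h} = {}"
    and mis: "maximal_independent_set V E (y ` {1..h})"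
    and pe: "\<forall>l\<in>{1..h}. {x l, y l} \<in> E"
begin

lemma finV: "finite V" using sg by (simp add: simple_graph_def)

lemma edge: assumes "{a,b} \<in> E" shows "a \<noteq> b \<and> a \<in> V \<and> b \<in> V"
proof -
  obtain c d where "c \<in> V" "d \<in> V" "c \<noteq> d" "{a,b} = {c,d}"
    using sg assms unfolding simple_graph_def by blast
  then show ?thesis by (auto simp: doubleton_eq_iff)
qed

lemma edge_sub: assumes "e \<in> E" shows "e \<subseteq> V"
proof -
  obtain a b where "a \<in> V" "b \<in> V" "e = {a,b}" using sg assms unfolding simple_graph_def by meson
  then show ?thesis by simp
qed

lemma cardV: "card V = 2*h"
proof -
  have "card (x ` {1..h}) = h" using ix by (simp add: card_image)
  moreover have "card (y ` {1..h}) = h" using iy by (simp add: card_image)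
  ultimately show ?thesis using dj Vd by (simp add: card_Un_disjoint)
qed

lemma ext_mis:
  assumes "independent_set V E T"
  shows "\<exists>S. T \<subseteq> S \<and> maximal_independent_set V E S"
proof -
  let ?F = "{S. T \<subseteq> S \<and> independent_set V E S}"
  have "?F \<subseteq> Pow V" by (auto simp: independent_set_def)
  then have "finite ?F" using finV by (meson finite_Pow_iff finite_subset)
  moreover have "?F \<noteq> {}" using assms by blast
  ultimately have "\<exists>S\<in>?F. \<forall>b\<in>?F. S \<le> b \<longrightarrow> S = b" by (rule finite_has_maximal)
  then obtain S where S: "S \<in> ?F" "\<forall>b\<in>?F. S \<le> b \<longrightarrow> S = b" by blast
  have "maximal_independent_set V E S"
    unfolding maximal_independent_set_def
  proof (intro conjI allI impI)
    show "independent_set V E S" using S(1) by blast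
    fix T' assume "S \<subset> T'"
    then show "\<not> independent_set V E T'" using S by blast
  qed
  then show ?thesis using S(1) by blast
qed

definition idx :: "'a \<Rightarrow> nat" where
  "idx v = (if v \<in> x ` {1..h} then inv_into {1..h} x v else inv_into {1..h} y v)"

lemma idx: assumes "v \<in> V" shows "idx v \<in> {1..h} \<and> (v = x (idx v) \<or> v = y (idx v))"
proof (cases "v \<in> x ` {1..h}")
  case True
  then obtain a where a: "a \<in> {1..h}" "v = x a" by blast
  then have "idx v = a" using True ix by (simp add: idx_def inv_into_f_f)
  then show ?thesis using a by simp
next
  case False
  then obtain a where a: "a \<in> {1..h}" "v = y a" using assms Vd by blast
  then have "idx v = a" using False iy by (simp add: idx_def inv_into_f_f)
  then show ?thesis using a by simp
qed

lemma xy_ne: "l \<in> {1..h} \<Longrightarrow> x l \<noteq> y l" using dj by blast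

lemma kl:
  assumes S: "maximal_independent_set V E S" and l: "l \<in> {1..h}"
  shows "x l \<in> S \<or> y l \<in> S"
proof (rule ccontr)
  assume nl: "\<not> (x l \<in> S \<or> y l \<in> S)"
  have SV: "S \<subseteq> V" and ind: "\<forall>e\<in>E. \<not> e \<subseteq> S"
    using S by (auto simp: maximal_independent_set_def independent_set_def)
  let ?C = "V - S"
  have vc: "vertex_cover V E ?C"
    unfolding vertex_cover_def using ind edge_sub by blast
  have "minimal_vertex_cover V E ?C"
    unfolding minimal_vertex_cover_def
  proof (intro conjI allI impI vc)
    fix D assume D: "D \<subset> ?C"
    show "\<not> vertex_cover V E D"
    proof
      assume vD: "vertex_cover V E D"
      obtain v where v: "v \<in> ?C" "v \<notin> D" using D by blast
      have "independent_set V E (insert v S)"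
        unfolding independent_set_def
      proof (intro conjI ballI)
        show "insert v S \<subseteq> V" using v SV by blast
        fix e assume e: "e \<in> E"
        show "\<not> e \<subseteq> insert v S"
        proof
          assume es: "e \<subseteq> insert v S"
          obtain w where "w \<in> e" "w \<in> D" using vD e unfolding vertex_cover_def by blast
          then show False using es D v by blast
        qed
      qed
      moreover have "S \<subset> insert v S" using v by blast
      ultimately show False using S unfolding maximal_independent_set_def by blast
    qed
  qed
  then have "2 * card ?C = card V" using vw unfolding very_well_covered_def by blast
  then have "card ?C = h" using cardV by simp
  moreover have "card ?C = card V - card S" using SV finV by (simp add: card_Diff_subset finite_subset)
  ultimately have cS: "card S = h" using cardV card_mono[OF finV SV] by simp
  have "inj_on idx S"
  proof (rule inj_onI)
    fix v w assume vw: "v \<in> S" "w \<in> S" "idx v = idx w"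
    show "v = w"
    proof (rule ccontr)
      assume "v \<noteq> w"
      have vV: "v \<in> V" "w \<in> V" using vw SV by auto
      have iv: "idx v \<in> {1..h}" "v = x (idx v) \<or> v = y (idx v)" using idx[OF vV(1)] by auto
      have iw: "w = x (idx v) \<or> w = y (idx v)" using idx[OF vV(2)] vw(3) by simp
      have "{x (idx v), y (idx v)} \<subseteq> S" using iv iw vw \<open>v \<noteq> w\<close> by auto
      moreover have "{x (idx v), y (idx v)} \<in> E" using pe iv(1) by blast
      ultimately show False using ind by blast
    qed
  qed
  moreover have "idx ` S \<subseteq> {1..h} - {l}"
  proof
    fix c assume "c \<in> idx ` S"
    then obtain v where v: "v \<in> S" "c = idx v" by blast
    then have "v \<in> V" using SV by auto
    then show "c \<in> {1..h} - {l}" using idx[of v] v nl by auto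
  qed
  ultimately have "card S \<le> card ({1..h} - {l})"
    by (metis card_image card_mono finite_Diff finite_atLeastAtMost)
  then show False using cS l by simp linarith
qed

lemma P1:
  assumes q: "q \<in> {1..h}" and j: "j \<in> {1..h}" and r: "r \<in> {1..h}"
    and d: "q \<noteq> j" "j \<noteq> r" "q \<noteq> r"
    and z: "z \<in> {x q, y q}" and e1: "{z, x j} \<in> E" and e2: "{y j, x r} \<in> E"
  shows "{z, x r} \<in> E"
proof (rule ccontr)
  assume ne: "{z, x r} \<notin> E"
  have "independent_set V E {z, x r}"
    unfolding independent_set_def
  proof (intro conjI ballI)
    show "{z, x r} \<subseteq> V" using z q r Vd by auto
    fix e assume e: "e \<in> E"
    then obtain a b where "e = {a,b}" "a \<noteq> b" using sg unfolding simple_graph_def by blast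
    then show "\<not> e \<subseteq> {z, x r}" using e ne by (auto simp: doubleton_eq_iff insert_commute)
  qed
  then obtain S where S: "{z, x r} \<subseteq> S" "maximal_independent_set V E S" using ext_mis by blast
  have ind: "\<forall>e\<in>E. \<not> e \<subseteq> S" using S(2) by (auto simp: maximal_independent_set_def independent_set_def)
  from kl[OF S(2) j] show False
  proof
    assume "x j \<in> S" then have "{z, x j} \<subseteq> S" using S(1) by simp
    then show False using ind e1 by blast
  next
    assume "y j \<in> S" then have "{y j, x r} \<subseteq> S" using S(1) by simp
    then show False using ind e2 by blast
  qed
qed

end


theorem lemma4p2:
  fixes V :: "'a set" and E :: "'a set set" and x y :: "nat \<Rightarrow> 'a"
    and h s i j k :: nat and es :: "'a set list" and t :: 'a
  assumes "simple_graph V E"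
    and "very_well_covered V E"
    and "V = x ` {1..h} \<union> y ` {1..h}"
    and "inj_on x {1..h}" and "inj_on y {1..h}" and "x ` {1..h} \<inter> y ` {1..h} = {}"
    and "minimal_vertex_cover V E (x ` {1..h})"
    and "maximal_independent_set V E (y ` {1..h})"
    and "\<forall>l\<in>{1..h}. {x l, y l} \<in> E"
    and "s \<ge> 1" and "length es = s" and "set es \<subseteq> E"
    and "i \<in> {1..h}" and "j \<in> {1..h}" and "k \<in> {1..h}"
    and "i \<noteq> j" and "j \<noteq> k" and "i \<noteq> k"
    and "t \<in> {x i, y i}"
    and "edge_G' E es t (x j)" and "edge_G' E es (y j) (x k)"
  shows "edge_G' E es t (x k) \<or> edge_G' E es t (y j)"
proof -
  interpret G: vwc V E x y h using assms(1-6,8,9) by unfold_locales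
  obtain f m where f: "wlk E es f m" "f 0 = t" "f (2*m+1) = x j" using toW[OF assms(20)] by blast
  obtain g n where g: "wlk E es g n" "g 0 = y j" "g (2*n+1) = x k" using toW[OF assms(21)] by blast
  have e1: "{f (2*m), x j} \<in> E" using f(1,3) unfolding wlk_def by (metis Suc_eq_plus1 lessI)
  have e2: "{y j, g 1} \<in> E"
  proof -
    have "{g 0, g (Suc 0)} \<in> E" using g(1) unfolding wlk_def by simp
    then show ?thesis using g(2) by simp
  qed
  have g1V: "g 1 \<in> V" and g1n: "g 1 \<noteq> y j" using G.edge[OF e2] by auto
  have "g 1 \<notin> y ` {1..h}"
  proof
    assume "g 1 \<in> y ` {1..h}"
    moreover have "y j \<in> y ` {1..h}" using assms(14) by blast
    ultimately have "{y j, g 1} \<subseteq> y ` {1..h}" by blast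
    then show False using e2 assms(8) unfolding maximal_independent_set_def independent_set_def by blast
  qed
  then obtain r where r: "r \<in> {1..h}" "g 1 = x r" using g1V assms(3) by blast
  have pV: "f (2*m) \<in> V" and pn: "f (2*m) \<noteq> x j" using G.edge[OF e1] by auto
  define q where "q = G.idx (f (2*m))"
  have q: "q \<in> {1..h}" "f (2*m) = x q \<or> f (2*m) = y q" using G.idx[OF pV] q_def by auto
  have conn: "{f (2*m), g 1} \<in> E \<or> f (2*m) = g 1"
  proof (cases "r = j")
    case True then show ?thesis using e1 r by simp
  next
    case rj: False
    show ?thesis
    proof (cases "q = j")
      case True
      then have "f (2*m) = y j" using q pn by auto
      then show ?thesis using e2 by simp
    next
      case qj: False
      show ?thesis
      proof (cases "q = r")
        case True
        show ?thesis
        proof (cases "f (2*m) = x q")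
          case True then show ?thesis using r \<open>q = r\<close> by simp
        next
          case False
          then have "f (2*m) = y r" using q \<open>q = r\<close> by auto
          then show ?thesis using assms(9) r by (simp add: insert_commute)
        qed
      next
        case False
        have "{f (2*m), x r} \<in> E"
          using G.P1[OF q(1) assms(14) r(1) qj rj[symmetric] False _ e1] q(2) e2 r(2) by auto
        then show ?thesis using r by simp
      qed
    qed
  qed
  obtain h' m' where hm: "wlk E es h' m'" "h' 0 = t" "h' (2*m'+1) = x k \<or> h' (2*m'+1) = y j"
    using splice[OF f(1) g(1) conn] f(2) g(2,3) by metis
  have a1: "x i \<noteq> x k" using assms(4,13,15,18) by (metis inj_on_eq_iff)
  have a2: "y i \<noteq> y j" using assms(5,13,14,16) by (metis inj_on_eq_iff)
  have a3: "y i \<noteq> x k" using assms(6,13,15) by blast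
  have a4: "x i \<noteq> y j" using assms(6,13,14) by blast
  have tk: "t \<noteq> x k" using a1 a3 assms(19) by auto
  have tj: "t \<noteq> y j" using a2 a4 assms(19) by auto
  from hm(3) show ?thesis
  proof
    assume "h' (2*m'+1) = x k"
    then show ?thesis using fromW[OF hm(1)] hm(2) tk by auto
  next
    assume "h' (2*m'+1) = y j"
    then show ?thesis using fromW[OF hm(1)] hm(2) tj by auto
  qed
qed

end
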